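(* For each positive integer $k$, $R_k\cong R_k^{k+1}$. Explicitly, for $A\in R_k$ and $l=1,\dots,k+1$, let $A_l$ be the $\mathbb{N}\times\mathbb{N}$ matrix whose first column is the $l$-th column of $A$ and whose blocks satisfy $A_l^{m,n}=A^{m,\,n+l+k(n-2)}$ for all $m\ge1$, $n\ge2$; then each $A_l\in R_k$ and the map $A\mapsto (A_1,\dots,A_{k+1})$ is a bijective left-$R_k$-linear map $R_k\to R_k^{k+1}$.
   Context: $\mathbb{N}=\{1,2,3,\dots\}$. $R$ denotes the ring of all $\mathbb{N}\times\mathbb{N}$ integer matrices with only finitely many nonzero entries in each row and each column, with entrywise addition and multiplication $(AB)_{i,j}=\sum_{l\ge1}a_{i,l}b_{l,j}$. Fix a positive integer $k$. Partition $\mathbb{N}$ into consecutive blocks $J_1=\{1\}$ and, for $m\ge2$, $J_m=\{2+k(m-2),\dots,1+k(m-1)\}$. For $A\in R$, the block $A^{m,n}$ is the submatrix with rows indexed by $J_m$ and columns by $J_n$. $R_k$ is the subring of $A\in R$ such that for all but finitely many pairs $(m,n)$ with $m,n\ge2$, $A^{m,n}=cI_k$ for some integer $c$. For a ring $S$, $S^n$ is the free left $S$-module of $n$-tuples with componentwise operations; $S^m\cong S^n$ means there is a bijective left-$S$-linear map $S^m\to S^n$, equivalently there exist $X\in M_{m\times n}(S)$, $Y\in M_{n\times m}(S)$ with $XY=I_m$, $YX=I_n$. *)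

theory Defs
  imports Main
begin

text \<open>N x N integer matrices are functions nat => nat => int; indices range over
  N = {1,2,...}; index 0 is unused and all entries involving it are required to be 0.\<close>

type_synonym mat = "nat \<Rightarrow> nat \<Rightarrow> int"

definition inR :: "mat \<Rightarrow> bool" where
  "inR A \<longleftrightarrow> (\<forall>j. A 0 j = 0) \<and> (\<forall>i. A i 0 = 0) \<and>
     (\<forall>i. finite {j. A i j \<noteq> 0}) \<and> (\<forall>j. finite {i. A i j \<noteq> 0})"

definition mat_add :: "mat \<Rightarrow> mat \<Rightarrow> mat" where
  "mat_add A B = (\<lambda>i j. A i j + B i j)"

definition mat_zero :: mat where
  "mat_zero = (\<lambda>i j. 0)"

definition mat_mult :: "mat \<Rightarrow> mat \<Rightarrow> mat" where
  "mat_mult A B = (\<lambda>i j. \<Sum>l\<in>{l. 1 \<le> l \<and> A i l \<noteq> 0}. A i l * B l j)"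

text \<open>Global index of the p-th element (p in {1..k}) of block J_m, m >= 2:
  J_m = {2+k(m-2), ..., 1+k(m-1)}.\<close>
definition bidx :: "nat \<Rightarrow> nat \<Rightarrow> nat \<Rightarrow> nat" where
  "bidx k m p = 1 + k * (m - 2) + p"

definition block_scalar :: "nat \<Rightarrow> mat \<Rightarrow> nat \<Rightarrow> nat \<Rightarrow> int \<Rightarrow> bool" where
  "block_scalar k A m n c \<longleftrightarrow>
     (\<forall>p\<in>{1..k}. \<forall>q\<in>{1..k}. A (bidx k m p) (bidx k n q) = (if p = q then c else 0))"

definition inRk :: "nat \<Rightarrow> mat \<Rightarrow> bool" where
  "inRk k A \<longleftrightarrow> inR A \<and>
     finite {(m, n). 2 \<le> m \<and> 2 \<le> n \<and> \<not> (\<exists>c. block_scalar k A m n c)}"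

text \<open>For a column index j >= 2: j lies in block J_n with n = (j-2) div k + 2, at position
  q = (j-2) mod k + 1.  Column j of A_l is column bidx k n' q of A with n' = n + l + k(n-2),
  i.e. A_l^{m,n} = A^{m,n'}.\<close>
definition col_src :: "nat \<Rightarrow> nat \<Rightarrow> nat \<Rightarrow> nat" where
  "col_src k l j = (let n = (j - 2) div k + 2; q = (j - 2) mod k + 1
                    in bidx k (n + l + k * (n - 2)) q)"

definition A_sub :: "nat \<Rightarrow> mat \<Rightarrow> nat \<Rightarrow> mat" where
  "A_sub k A l = (\<lambda>i j. if j = 0 then 0 else if j = 1 then A i l else A i (col_src k l j))"

definition tuples :: "nat \<Rightarrow> (nat \<Rightarrow> mat) set" where
  "tuples k = {v. (\<forall>l\<in>{1..k+1}. inRk k (v l)) \<and> (\<forall>l. l \<notin> {1..k+1} \<longrightarrow> v l = mat_zero)}"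

definition left_linear :: "nat \<Rightarrow> (mat \<Rightarrow> nat \<Rightarrow> mat) \<Rightarrow> bool" where
  "left_linear k f \<longleftrightarrow>
     (\<forall>A B. inRk k A \<longrightarrow> inRk k B \<longrightarrow> f (mat_add A B) = (\<lambda>l. mat_add (f A l) (f B l))) \<and>
     (\<forall>C A. inRk k C \<longrightarrow> inRk k A \<longrightarrow> f (mat_mult C A) = (\<lambda>l. mat_mult C (f A l)))"

definition Phi :: "nat \<Rightarrow> mat \<Rightarrow> nat \<Rightarrow> mat" where
  "Phi k A = (\<lambda>l. if l \<in> {1..k+1} then A_sub k A l else mat_zero)"

end

theory Submission imports Defs begin


definition src :: "nat \<Rightarrow> nat \<Rightarrow> nat \<Rightarrow> nat" where
  "src k l j = (if j = 1 then l else col_src k l j)"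

definition pos :: "nat \<Rightarrow> nat \<Rightarrow> nat \<times> nat" where
  "pos k c = (if c \<le> k+1 then (c,1) else
     (((c-2) div k - 1) mod (k+1) + 1, 2 + k*(((c-2) div k - 1) div (k+1)) + (c-2) mod k))"

definition NB :: "nat \<Rightarrow> nat \<Rightarrow> nat \<Rightarrow> nat" where
  "NB k l n = n + l + k*(n-2)"

lemma divmod_aux:
  fixes k a r :: nat
  assumes "r < k"
  shows "(k*a + r) div k = a" "(k*a + r) mod k = r"
  using assms by (auto simp: add.commute[of "k*a"])

lemma col_src_eq:
  assumes k: "1 \<le> k" and j: "2 \<le> j"
  shows "col_src k l j = 2 + k*((k+1)*((j-2) div k) + l) + (j-2) mod k"
proof -
  define d where "d = (j-2) div k"
  define r where "r = (j-2) mod k"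
  have "col_src k l j = 1 + k * (d + 2 + l + k * d - 2) + (r + 1)"
    by (simp add: col_src_def bidx_def Let_def d_def r_def)
  also have "\<dots> = 2 + k*((k+1)*d + l) + r" by (simp add: algebra_simps)
  finally show ?thesis by (simp add: d_def r_def)
qed

lemma pos_src:
  assumes k: "1 \<le> k" and l: "l \<in> {1..k+1}" and j: "1 \<le> j"
  shows "pos k (src k l j) = (l, j)"
proof (cases "j = 1")
  case True
  then show ?thesis using l by (simp add: src_def pos_def)
next
  case False
  then have j2: "2 \<le> j" using j by simp
  define d where "d = (j-2) div k"
  define r where "r = (j-2) mod k"
  have rk: "r < k" using k by (simp add: r_def)
  have jdr: "j = 2 + k*d + r" using j2 by (simp add: d_def r_def)
  define e where "e = (k+1)*d + l"
  have c: "src k l j = 2 + k*e + r" using False col_src_eq[OF k j2]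
    by (simp add: src_def e_def d_def r_def)
  have e1: "1 \<le> e" using l by (simp add: e_def)
  have "k*1 \<le> k*e" using e1 by (rule mult_left_mono) simp
  then have big: "\<not> (2 + k*e + r \<le> k+1)" using k by linarith
  have q1: "(2 + k*e + r - 2) div k = e" "(2 + k*e + r - 2) mod k = r"
    using divmod_aux[OF rk] by simp_all
  have e2: "e - 1 = (k+1)*d + (l - 1)" using l by (simp add: e_def)
  have lk: "l - 1 < k+1" using l by auto
  have q2: "(e-1) div (k+1) = d" "(e-1) mod (k+1) = l - 1"
    unfolding e2 using divmod_aux[OF lk] by simp_all
  show ?thesis unfolding c pos_def using big q1 q2 l jdr by simp
qed

lemma src_pos:
  assumes k: "1 \<le> k" and c: "1 \<le> c"
  shows "fst (pos k c) \<in> {1..k+1} \<and> 1 \<le> snd (pos k c) \<and> src k (fst (pos k c)) (snd (pos k c)) = c"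
proof (cases "c \<le> k+1")
  case True
  then show ?thesis using c by (simp add: pos_def src_def)
next
  case False
  define e where "e = (c-2) div k"
  define r where "r = (c-2) mod k"
  define l where "l = (e-1) mod (k+1) + 1"
  define d where "d = (e-1) div (k+1)"
  have rk: "r < k" using k by (simp add: r_def)
  have cer: "c = 2 + k*e + r" using False by (simp add: e_def r_def)
  have e1: "1 \<le> e"
  proof (rule ccontr)
    assume "\<not> 1 \<le> e" then have "e = 0" by simp
    then show False using cer rk False by simp
  qed
  have ed0: "e - 1 = (k+1)*d + (l - 1)" unfolding l_def d_def using mult_div_mod_eq[of "k+1" "e-1"] by simp
  have ed: "e = (k+1)*d + l" using ed0 e1 by (simp add: l_def)
  have p: "pos k c = (l, 2 + k*d + r)" using False by (simp add: pos_def e_def r_def l_def d_def)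
  have lr: "l \<in> {1..k+1}" by (simp add: l_def)
  have "src k l (2 + k*d + r) = 2 + k*((k+1)*((k*d + r) div k) + l) + (k*d+r) mod k"
    using col_src_eq[OF k, of "2 + k*d + r" l] by (simp add: src_def)
  also have "\<dots> = c" using divmod_aux[OF rk] cer ed by simp
  finally show ?thesis using p lr by simp
qed

lemma col_src_bidx:
  assumes k: "1 \<le> k" and n: "2 \<le> n" and q: "q \<in> {1..k}"
  shows "src k l (bidx k n q) = bidx k (NB k l n) q"
proof -
  have b: "bidx k n q = 2 + k*(n-2) + (q-1)" using q by (simp add: bidx_def)
  have qk: "q - 1 < k" using q by auto
  have ne: "bidx k n q \<noteq> 1" using q by (simp add: bidx_def)
  have "src k l (bidx k n q) = 2 + k*((k+1)*(n-2) + l) + (q-1)"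
    using col_src_eq[OF k, of "bidx k n q" l] ne b divmod_aux[OF qk, of "n-2"]
    by (simp add: src_def)
  also have "\<dots> = bidx k (NB k l n) q"
  proof -
    obtain n0 where "n = n0 + 2" using n by (metis add.commute le_add_diff_inverse)
    then show ?thesis using q by (simp add: bidx_def NB_def algebra_simps)
  qed
  finally show ?thesis .
qed



lemma A_sub_src: "j \<noteq> 0 \<Longrightarrow> A_sub k A l i j = A i (src k l j)"
  by (simp add: A_sub_def src_def)

lemma bidx_ge2: "1 \<le> q \<Longrightarrow> 2 \<le> bidx k n q"
  by (simp add: bidx_def)

lemma block_transfer:
  assumes k: "1 \<le> k" and n: "2 \<le> n"
  shows "block_scalar k (A_sub k A l) m n c \<longleftrightarrow> block_scalar k A m (NB k l n) c"
proof -
  have "\<And>p q. q \<in> {1..k} \<Longrightarrow> A_sub k A l (bidx k m p) (bidx k n q) = A (bidx k m p) (bidx k (NB k l n) q)"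
  proof -
    fix p q assume q: "q \<in> {1..k}"
    have "bidx k n q \<noteq> 0" using bidx_ge2[of q k n] q by auto
    then show "A_sub k A l (bidx k m p) (bidx k n q) = A (bidx k m p) (bidx k (NB k l n) q)"
      using A_sub_src col_src_bidx[OF k n q] by simp
  qed
  then show ?thesis unfolding block_scalar_def by simp
qed

definition nonsc :: "nat \<Rightarrow> mat \<Rightarrow> (nat \<times> nat) set" where
  "nonsc k A = {(m, n). 2 \<le> m \<and> 2 \<le> n \<and> \<not> (\<exists>c. block_scalar k A m n c)}"

lemma inRk_alt: "inRk k A \<longleftrightarrow> inR A \<and> finite (nonsc k A)"
  by (simp add: inRk_def nonsc_def)



lemma NB_inj': "inj_on (\<lambda>(m,n). (m, NB k l n)) {(m,n). 2 \<le> n}"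
proof (rule inj_onI, clarsimp)
  fix m n n' assume n: "2 \<le> n" "2 \<le> n'" and e: "NB k l n = NB k l n'"
  obtain a where a: "n = a + 2" using n by (metis add.commute le_add_diff_inverse)
  obtain b where b: "n' = b + 2" using n by (metis add.commute le_add_diff_inverse)
  have "(k+1)*a = (k+1)*b" using e by (simp add: NB_def a b algebra_simps)
  then have "a = b" by (metis mult_cancel1 add_is_0 one_neq_zero)
  then show "n = n'" using a b by simp
qed

lemma src_inj:
  assumes k: "1 \<le> k" and l: "l \<in> {1..k+1}"
  shows "inj_on (src k l) {j. 1 \<le> j}"
  by (rule inj_on_inverseI[where g = "\<lambda>c. snd (pos k c)"]) (use pos_src[OF k l] in simp)

lemma A_sub_inRk:
  assumes k: "1 \<le> k" and l: "l \<in> {1..k+1}" and A: "inRk k A"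
  shows "inRk k (A_sub k A l)"
proof -
  have R: "inR A" and F: "finite (nonsc k A)" using A by (auto simp: inRk_alt)
  have "inR (A_sub k A l)"
    unfolding inR_def
  proof (intro conjI allI)
    fix j show "A_sub k A l 0 j = 0" using R by (simp add: A_sub_def inR_def)
  next
    fix i show "A_sub k A l i 0 = 0" by (simp add: A_sub_def)
  next
    fix i
    have "{j. A_sub k A l i j \<noteq> 0} \<subseteq> src k l -` {c. A i c \<noteq> 0} \<inter> {j. 1 \<le> j}"
      by (auto simp: A_sub_def src_def split: if_splits)
    moreover have "finite (src k l -` {c. A i c \<noteq> 0} \<inter> {j. 1 \<le> j})"
      using R src_inj[OF k l] by (intro finite_vimage_IntI) (auto simp: inR_def)
    ultimately show "finite {j. A_sub k A l i j \<noteq> 0}" by (rule finite_subset)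
  next
    fix j
    have "{i. A_sub k A l i j \<noteq> 0} \<subseteq> {i. A i (src k l j) \<noteq> 0}"
      by (auto simp: A_sub_def src_def)
    then show "finite {i. A_sub k A l i j \<noteq> 0}" using R by (auto simp: inR_def intro: finite_subset)
  qed
  moreover have "nonsc k (A_sub k A l) \<subseteq> (\<lambda>(m,n). (m, NB k l n)) -` nonsc k A \<inter> {(m,n). 2 \<le> n}"
    using block_transfer[OF k] by (auto simp: nonsc_def NB_def)
  moreover have "finite ((\<lambda>(m,n). (m, NB k l n)) -` nonsc k A \<inter> {(m,n). 2 \<le> n})"
    using F NB_inj' by (intro finite_vimage_IntI)
  ultimately show ?thesis unfolding inRk_alt by (meson finite_subset)
qed



definition Psi :: "nat \<Rightarrow> (nat \<Rightarrow> mat) \<Rightarrow> mat" where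
  "Psi k v = (\<lambda>i c. if c = 0 then 0 else v (fst (pos k c)) i (snd (pos k c)))"

lemma Phi_inj:
  assumes k: "1 \<le> k"
  shows "inj_on (Phi k) {A. inRk k A}"
proof (rule inj_onI)
  fix A B assume A: "A \<in> {A. inRk k A}" and B: "B \<in> {A. inRk k A}" and e: "Phi k A = Phi k B"
  show "A = B"
  proof (intro ext)
    fix i c
    show "A i c = B i c"
    proof (cases "c = 0")
      case True then show ?thesis using A B by (simp add: inRk_def inR_def)
    next
      case False
      then have c: "1 \<le> c" by simp
      note sp = src_pos[OF k c]
      define l j where "l = fst (pos k c)" and "j = snd (pos k c)"
      have lr: "l \<in> {1..k+1}" and j: "1 \<le> j" and s: "src k l j = c" using sp by (auto simp: l_def j_def)
      have "A_sub k A l = A_sub k B l" using fun_cong[OF e, of l] lr by (simp add: Phi_def)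
      then have "A_sub k A l i j = A_sub k B l i j" by simp
      then show ?thesis using A_sub_src[of j k A l i] A_sub_src[of j k B l i] j s by simp
    qed
  qed
qed

lemma Psi_sub:
  assumes k: "1 \<le> k" and v: "v \<in> tuples k" and l: "l \<in> {1..k+1}"
  shows "A_sub k (Psi k v) l = v l"
proof (intro ext)
  fix i j
  have vl: "inR (v l)" using v l by (simp add: tuples_def inRk_def)
  show "A_sub k (Psi k v) l i j = v l i j"
  proof (cases "j = 0")
    case True then show ?thesis using vl by (simp add: A_sub_def inR_def)
  next
    case False
    then have j: "1 \<le> j" by simp
    have p: "pos k (src k l j) = (l, j)" using pos_src[OF k l j] .
    have "src k l j \<noteq> 0"
    proof
      assume "src k l j = 0"
      then have "pos k (src k l j) = (0,1)" by (simp add: pos_def)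
      then show False using p l by simp
    qed
    then show ?thesis using A_sub_src[OF False] p by (simp add: Psi_def)
  qed
qed

lemma Psi_inRk:
  assumes k: "1 \<le> k" and v: "v \<in> tuples k"
  shows "inRk k (Psi k v)"
proof -
  let ?A = "Psi k v"
  have vR: "\<And>l. l \<in> {1..k+1} \<Longrightarrow> inR (v l) \<and> finite (nonsc k (v l))"
    using v by (simp add: tuples_def inRk_alt)
  have colfin: "\<And>c. finite {i. ?A i c \<noteq> 0}"
  proof -
    fix c
    show "finite {i. ?A i c \<noteq> 0}"
    proof (cases "c = 0")
      case True then show ?thesis by (simp add: Psi_def)
    next
      case False
      have "fst (pos k c) \<in> {1..k+1}" using src_pos[OF k] False by simp
      then have "finite {i. v (fst (pos k c)) i (snd (pos k c)) \<noteq> 0}" using vR by (simp add: inR_def)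
      then show ?thesis using False by (simp add: Psi_def)
    qed
  qed
  have R: "inR ?A"
    unfolding inR_def
  proof (intro conjI allI)
    fix j show "?A 0 j = 0"
    proof (cases "j = 0")
      case False
      have "fst (pos k j) \<in> {1..k+1}" using src_pos[OF k] False by simp
      then show ?thesis using vR by (simp add: inR_def Psi_def)
    qed (simp add: Psi_def)
  next
    fix i show "?A i 0 = 0" by (simp add: Psi_def)
  next
    fix i
    have "{c. ?A i c \<noteq> 0} \<subseteq> (\<Union>l\<in>{1..k+1}. src k l ` {j. v l i j \<noteq> 0})"
    proof
      fix c assume "c \<in> {c. ?A i c \<noteq> 0}"
      then have c: "c \<noteq> 0" and nz: "v (fst (pos k c)) i (snd (pos k c)) \<noteq> 0" by (auto simp: Psi_def split: if_splits)
      have sp: "fst (pos k c) \<in> {1..k+1}" "src k (fst (pos k c)) (snd (pos k c)) = c"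
        using src_pos[OF k] c by auto
      show "c \<in> (\<Union>l\<in>{1..k+1}. src k l ` {j. v l i j \<noteq> 0})"
        using sp nz by (intro UN_I[of "fst (pos k c)"]) (auto intro: image_eqI[where x = "snd (pos k c)"])
    qed
    moreover have "finite (\<Union>l\<in>{1..k+1}. src k l ` {j. v l i j \<noteq> 0})"
      using vR by (auto simp: inR_def)
    ultimately show "finite {c. ?A i c \<noteq> 0}" by (rule finite_subset)
  next
    fix j show "finite {i. ?A i j \<noteq> 0}" by (rule colfin)
  qed
  define S where "S = (\<Union>q\<in>{1..k}. {i. ?A i (bidx k 2 q) \<noteq> 0})"
  have Sfin: "finite S" using colfin by (simp add: S_def)
  have "nonsc k ?A \<subseteq> (\<Union>i\<in>S. {..i+2}) \<times> {2} \<union>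
          (\<Union>l\<in>{1..k+1}. (\<lambda>(m,n). (m, NB k l n)) ` nonsc k (v l))"
  proof
    fix x assume x: "x \<in> nonsc k ?A"
    obtain m n where xe: "x = (m,n)" by (cases x)
    have m: "2 \<le> m" and n: "2 \<le> n" and ns: "\<And>c. \<not> block_scalar k ?A m n c"
      using x by (auto simp: xe nonsc_def)
    show "x \<in> (\<Union>i\<in>S. {..i+2}) \<times> {2} \<union>
          (\<Union>l\<in>{1..k+1}. (\<lambda>(m,n). (m, NB k l n)) ` nonsc k (v l))"
    proof (cases "n = 2")
      case True
      from ns[of 0] obtain p q where p: "p \<in> {1..k}" and q: "q \<in> {1..k}"
        and nz: "?A (bidx k m p) (bidx k 2 q) \<noteq> 0"
        using True unfolding block_scalar_def by (auto split: if_splits)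
      have iS: "bidx k m p \<in> S" using q nz by (auto simp: S_def)
      have "m - 2 \<le> k * (m - 2)" using k by simp
      then have "m \<le> bidx k m p + 2" unfolding bidx_def by linarith
      then show ?thesis using iS True xe by auto
    next
      case False
      then have n3: "3 \<le> n" using n by simp
      define e where "e = n - 2"
      define l where "l = (e-1) mod (k+1) + 1"
      define n0 where "n0 = (e-1) div (k+1) + 2"
      have e1: "1 \<le> e" using n3 by (simp add: e_def)
      have ed0: "e - 1 = (k+1)*(n0-2) + (l - 1)" unfolding l_def n0_def using mult_div_mod_eq[of "k+1" "e-1"] by simp
      have nn: "n = NB k l n0"
      proof -
        have "n = e + 2" using n by (simp add: e_def)
        also have "\<dots> = (k+1)*(n0-2) + l + 2" using ed0 e1 by (simp add: l_def)
        also have "\<dots> = NB k l n0" by (simp add: NB_def n0_def algebra_simps)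
        finally show ?thesis .
      qed
      have lr: "l \<in> {1..k+1}" by (simp add: l_def)
      have n02: "2 \<le> n0" by (simp add: n0_def)
      have "\<And>c. \<not> block_scalar k (v l) m n0 c"
        using ns block_transfer[OF k n02, of "?A" l m] Psi_sub[OF k v lr] nn by simp
      then have "(m, n0) \<in> nonsc k (v l)" using m n02 by (simp add: nonsc_def)
      then have "x \<in> (\<lambda>(m,n). (m, NB k l n)) ` nonsc k (v l)"
        using xe nn by (auto intro: image_eqI[where x = "(m,n0)"])
      then show ?thesis using lr by blast
    qed
  qed
  moreover have "finite ((\<Union>i\<in>S. {..i+2}) \<times> {2} \<union>
          (\<Union>l\<in>{1..k+1}. (\<lambda>(m,n). (m, NB k l n)) ` nonsc k (v l)))"
    using Sfin vR by auto
  ultimately show ?thesis using R unfolding inRk_alt by (meson finite_subset)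
qed



lemma Phi_linear: "left_linear k (Phi k)"
  unfolding left_linear_def
proof (intro conjI allI impI)
  fix A B show "Phi k (mat_add A B) = (\<lambda>l. mat_add (Phi k A l) (Phi k B l))"
    by (auto simp: Phi_def mat_add_def A_sub_def mat_zero_def fun_eq_iff)
next
  fix C A show "Phi k (mat_mult C A) = (\<lambda>l. mat_mult C (Phi k A l))"
    by (auto simp: Phi_def mat_mult_def A_sub_def mat_zero_def fun_eq_iff)
qed

lemma Phi_bij:
  assumes k: "1 \<le> k"
  shows "bij_betw (Phi k) {A. inRk k A} (tuples k)"
  unfolding bij_betw_def
proof (intro conjI Phi_inj[OF k] equalityI subsetI)
  fix y assume "y \<in> Phi k ` {A. inRk k A}"
  then obtain A where A: "inRk k A" and y: "y = Phi k A" by auto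
  show "y \<in> tuples k" using A_sub_inRk[OF k _ A] by (simp add: y tuples_def Phi_def)
next
  fix v assume v: "v \<in> tuples k"
  have "Phi k (Psi k v) = v"
  proof
    fix l show "Phi k (Psi k v) l = v l"
      using Psi_sub[OF k v] v by (simp add: Phi_def tuples_def)
  qed
  then show "v \<in> Phi k ` {A. inRk k A}" using Psi_inRk[OF k v] by force
qed

theorem mainTheorem4:
  fixes k :: nat
  assumes "1 \<le> k"
  shows "(\<exists>f. bij_betw f {A. inRk k A} (tuples k) \<and> left_linear k f) \<and>
         (\<forall>A. inRk k A \<longrightarrow> (\<forall>l\<in>{1..k+1}. inRk k (A_sub k A l))) \<and>
         bij_betw (Phi k) {A. inRk k A} (tuples k) \<and> left_linear k (Phi k)"
  using Phi_bij[OF assms] Phi_linear A_sub_inRk[OF assms] by blast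


end
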